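(* Let $G=C_3^3$ with basis $(e_1,e_2,e_3)$, let $e_0=e_1+e_2+e_3$, and let $U=e_1^2e_2^2e_3^2e_0$ (a sequence of length $7$). Then for every $k\in\mathbb N$, \[ \mathsf L(U^{3k})=3k+2\cdot[0,2k]. \] In particular $\max\mathsf L(U^{3k})/\min\mathsf L(U^{3k})=7/3$ for every $k\in\mathbb N$.
   Context: $C_3^3$ denotes the elementary abelian $3$-group of rank $3$. $[a,b]=\{x\in\mathbb Z:a\le x\le b\}$, $y+L=\{y+a:a\in L\}$, $k\cdot L=\{ka:a\in L\}$. For a finite abelian group $G$, a sequence over $G$ is an element of the free abelian monoid $\mathcal F(G)$ with basis $G$ (a finite unordered list of elements of $G$, repetitions allowed; $e_1^2$ means $e_1$ occurring twice, and $U^{3k}$ is the $3k$-fold product of $U$). $\mathcal B(G)$ is the monoid of zero-sum sequences over $G$. An atom is a minimal zero-sum sequence, i.e. a nonempty zero-sum sequence that is not a product of two nonempty zero-sum sequences. For $B\in\mathcal B(G)$, $\mathsf L(B)=\{k\in\mathbb N_0: B \text{ is a product of } k \text{ atoms}\}$. *)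

theory Defs
  imports Complex_Main "HOL-Library.Numeral_Type" "HOL-Library.Product_Plus" "HOL-Library.Multiset"
begin

type_synonym G = "3 \<times> 3 \<times> 3"

definition nsmul :: "nat \<Rightarrow> 'a::comm_monoid_add \<Rightarrow> 'a" where
  "nsmul n x = (\<Sum>i<n. x)"

definition is_basis3 :: "G \<Rightarrow> G \<Rightarrow> G \<Rightarrow> bool" where
  "is_basis3 e1 e2 e3 \<longleftrightarrow>
     bij_betw (\<lambda>(a,b,c). nsmul a e1 + nsmul b e2 + nsmul c e3)
              ({0..<3} \<times> {0..<3} \<times> {0..<3}) (UNIV :: G set)"

definition zero_sum :: "'a::comm_monoid_add multiset \<Rightarrow> bool" where
  "zero_sum S \<longleftrightarrow> sum_mset S = 0"

definition atom :: "'a::comm_monoid_add multiset \<Rightarrow> bool" where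
  "atom A \<longleftrightarrow> A \<noteq> {#} \<and> zero_sum A \<and>
     \<not> (\<exists>B C. A = B + C \<and> B \<noteq> {#} \<and> C \<noteq> {#} \<and> zero_sum B \<and> zero_sum C)"

definition Lset :: "'a::comm_monoid_add multiset \<Rightarrow> nat set" where
  "Lset B = {k. \<exists>xs. length xs = k \<and> (\<forall>A\<in>set xs. atom A) \<and> sum_list xs = B}"

end

theory Submission imports Defs begin

lemma three0: "(3::3) = 0" by simp
lemma three_mult: "(3::3) * x = 0" by (metis three0 mult_zero_left)
lemma t3: "(x::3) + x + x = 0"
proof -
  have "x + x + x = 3 * x" by (simp add: algebra_simps)
  thus ?thesis by (simp add: three_mult)
qed
lemma tG: "(x::G) + x + x = 0"
  by (cases x) (simp add: zero_prod_def three_mult)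

lemma nsmul_0[simp]: "nsmul 0 x = 0" by (simp add: nsmul_def)
lemma nsmul_Suc: "nsmul (Suc n) x = x + nsmul n x" by (simp add: nsmul_def add.commute)
lemma nsmul_1[simp]: "nsmul 1 x = x" by (simp add: nsmul_def)
lemma nsmul_Suc0[simp]: "nsmul (Suc 0) x = x" by (simp add: nsmul_def)
lemma nsmul_add: "nsmul (m+n) x = nsmul m x + nsmul n x"
  by (induction m) (simp_all add: nsmul_Suc add.assoc)
lemma nsmul_distrib: "nsmul n (x+y) = nsmul n x + nsmul n y"
  by (simp add: nsmul_def sum.distrib)
lemma nsmul_3: "nsmul 3 (x::G) = 0"
proof -
  have "nsmul 3 x = x + (x + (x + 0))" by (simp add: numeral_3_eq_3 nsmul_Suc)
  thus ?thesis using tG[of x] by (simp add: add.assoc)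
qed
lemma nsmul_mult3: "nsmul (3*q) (x::G) = 0"
proof (induction q)
  case (Suc q)
  have "3 * Suc q = 3 + 3 * q" by simp
  thus ?case using Suc by (simp only: nsmul_add nsmul_3) simp
qed simp
lemma nsmul_mod: "nsmul n (x::G) = nsmul (n mod 3) x"
proof -
  have "n = 3 * (n div 3) + n mod 3" by simp
  hence "nsmul n x = nsmul (3 * (n div 3)) x + nsmul (n mod 3) x" by (metis nsmul_add)
  thus ?thesis by (simp add: nsmul_mult3)
qed
lemma sum_rep: "sum_mset (replicate_mset n x) = nsmul n x"
  by (induction n) (simp_all add: nsmul_Suc)

lemma size_sum_list: "size (sum_list (xs::'a multiset list)) = sum_list (map size xs)"
  by (induction xs) auto
lemma count_sum_list: "count (sum_list (xs::'a multiset list)) y = sum_list (map (\<lambda>A. count A y) xs)"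
  by (induction xs) auto

lemma list_bounds:
  fixes s g :: "'b \<Rightarrow> nat"
  assumes "\<forall>A\<in>set xs. odd (s A) \<and> 3 \<le> s A \<and> s A \<le> 7 \<and> s A \<le> 3 + 4 * g A"
  shows "3*length xs \<le> sum_list (map s xs) \<and> sum_list (map s xs) \<le> 7*length xs
    \<and> sum_list (map s xs) \<le> 3*length xs + 4*sum_list (map g xs)
    \<and> even (sum_list (map s xs) + length xs)"
  using assms by (induction xs) auto

lemma mod3_small: "x \<le> 6 \<Longrightarrow> ((x::nat) mod 3 = 0) = (x = 0 \<or> x = 3 \<or> x = 6)"
  by presburger

lemma less3: "(x::nat) < 3 \<longleftrightarrow> x = 0 \<or> x = 1 \<or> x = 2" by auto
lemma le0: "(x::nat) \<le> 0 \<longleftrightarrow> x = 0" by auto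
lemma le1: "(x::nat) \<le> 1 \<longleftrightarrow> x = 0 \<or> x = 1" by auto
lemma le2: "(x::nat) \<le> 2 \<longleftrightarrow> x = 0 \<or> x = 1 \<or> x = 2" by auto
lemma le3: "(x::nat) \<le> 3 \<longleftrightarrow> x = 0 \<or> x = 1 \<or> x = 2 \<or> x = 3" by auto

definition Z :: "nat \<Rightarrow> nat \<Rightarrow> nat \<Rightarrow> nat \<Rightarrow> bool" where
  "Z a b c d \<longleftrightarrow> (a+d) mod 3 = 0 \<and> (b+d) mod 3 = 0 \<and> (c+d) mod 3 = 0"

lemma small_case: "a < 3 \<Longrightarrow> b < 3 \<Longrightarrow> c < 3 \<Longrightarrow> d < 3 \<Longrightarrow> Z a b c d \<Longrightarrow> 0 < a+b+c+d
  \<Longrightarrow> odd (a+b+c+d) \<and> 3 \<le> a+b+c+d \<and> a+b+c+d \<le> 7 \<and> a+b+c+d \<le> 3 + 4 * d"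
  unfolding less3 by (elim disjE) (simp_all add: Z_def)

lemma atom3:
  fixes A :: "G multiset"
  assumes "atom A" "3 \<le> count A x"
  shows "A = {#x,x,x#}"
proof -
  define B where "B = {#x,x,x#}"
  have sub: "B \<subseteq># A" using assms(2) unfolding B_def subseteq_mset_def by auto
  define C where "C = A - B"
  have AB: "A = B + C" unfolding C_def using sub by simp
  have zB: "zero_sum B" unfolding B_def zero_sum_def using tG[of x] by (simp add: add.assoc)
  have "sum_mset A = 0" using assms(1) unfolding atom_def zero_sum_def by blast
  hence zC: "zero_sum C" using zB AB unfolding zero_sum_def by simp
  have "B \<noteq> {#}" unfolding B_def by simp
  hence "C = {#}" using assms(1) AB zB zC unfolding atom_def by blast
  thus ?thesis using AB B_def by simp
qed

locale B3 =
  fixes e1 e2 e3 :: G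
  assumes basis: "is_basis3 e1 e2 e3"
begin

definition e0 where "e0 = e1 + e2 + e3"
definition f where "f = (\<lambda>(a,b,c). nsmul a e1 + nsmul b e2 + nsmul c e3)"

lemma inj: "inj_on f ({0..<3} \<times> {0..<3} \<times> {0..<3})"
  using basis unfolding is_basis3_def bij_betw_def f_def by blast

lemma f_eq:
  assumes "a < 3" "b < 3" "c < 3" "a' < 3" "b' < 3" "c' < 3"
  shows "f (a,b,c) = f (a',b',c') \<longleftrightarrow> a = a' \<and> b = b' \<and> c = c'"
  using inj_onD[OF inj, of "(a,b,c)" "(a',b',c')"] assms by auto

lemma crit: "nsmul a e1 + nsmul b e2 + nsmul c e3 + nsmul d e0 = 0 \<longleftrightarrow> Z a b c d"
proof -
  have "nsmul a e1 + nsmul b e2 + nsmul c e3 + nsmul d e0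
      = nsmul (a+d) e1 + nsmul (b+d) e2 + nsmul (c+d) e3"
    by (simp add: e0_def nsmul_add nsmul_distrib ac_simps)
  also have "\<dots> = f ((a+d) mod 3, (b+d) mod 3, (c+d) mod 3)"
    unfolding f_def by (simp add: nsmul_mod[of "a+d"] nsmul_mod[of "b+d"] nsmul_mod[of "c+d"])
  finally have 1: "nsmul a e1 + nsmul b e2 + nsmul c e3 + nsmul d e0 = \<dots>" .
  have 2: "(0::G) = f (0,0,0)" by (simp add: f_def)
  show ?thesis unfolding 1 Z_def by (subst 2, subst f_eq) auto
qed

lemma e1f: "e1 = f (1,0,0)" by (simp add: f_def)
lemma e2f: "e2 = f (0,1,0)" by (simp add: f_def)
lemma e3f: "e3 = f (0,0,1)" by (simp add: f_def)
lemma e0f: "e0 = f (1,1,1)" by (simp add: f_def e0_def)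

lemma fne: "(a,b,c) \<noteq> (a',b',c') \<Longrightarrow> a < 3 \<Longrightarrow> b < 3 \<Longrightarrow> c < 3 \<Longrightarrow> a' < 3 \<Longrightarrow> b' < 3 \<Longrightarrow> c' < 3
   \<Longrightarrow> f (a,b,c) \<noteq> f (a',b',c')"
  using f_eq by blast

lemma distinct0: "e1 \<noteq> e2" "e1 \<noteq> e3" "e2 \<noteq> e3" "e1 \<noteq> e0" "e2 \<noteq> e0" "e3 \<noteq> e0"
proof -
  have "f (1,0,0) \<noteq> f (0,1,0)" by (rule fne) auto
  thus "e1 \<noteq> e2" using e1f e2f by metis
  have "f (1,0,0) \<noteq> f (0,0,1)" by (rule fne) auto
  thus "e1 \<noteq> e3" using e1f e3f by metis
  have "f (0,1,0) \<noteq> f (0,0,1)" by (rule fne) auto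
  thus "e2 \<noteq> e3" using e2f e3f by metis
  have "f (1,0,0) \<noteq> f (1,1,1)" by (rule fne) auto
  thus "e1 \<noteq> e0" using e1f e0f by metis
  have "f (0,1,0) \<noteq> f (1,1,1)" by (rule fne) auto
  thus "e2 \<noteq> e0" using e2f e0f by metis
  have "f (0,0,1) \<noteq> f (1,1,1)" by (rule fne) auto
  thus "e3 \<noteq> e0" using e3f e0f by metis
qed

lemmas distinct[simp] = distinct0 distinct0[symmetric]

definition mk where "mk a b c d = replicate_mset a e1 + replicate_mset b e2 + replicate_mset c e3 + replicate_mset d e0"

lemma count_mk: "count (mk a b c d) x = (if x = e1 then a else 0) + (if x = e2 then b else 0) + (if x = e3 then c else 0) + (if x = e0 then d else 0)"
  by (auto simp: mk_def)

lemma count_mk_simps[simp]: "count (mk a b c d) e1 = a" "count (mk a b c d) e2 = b"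
  "count (mk a b c d) e3 = c" "count (mk a b c d) e0 = d"
  by (simp_all add: count_mk)

lemma set_mk: "set_mset (mk a b c d) \<subseteq> {e1,e2,e3,e0}"
  by (auto simp: mk_def split: if_splits)

lemma size_mk: "size (mk a b c d) = a + b + c + d"
  by (simp add: mk_def)

lemma zs_mk: "zero_sum (mk a b c d) \<longleftrightarrow> Z a b c d"
  unfolding zero_sum_def mk_def by (simp add: sum_rep crit)

lemma mk_add: "mk a b c d + mk a' b' c' d' = mk (a+a') (b+b') (c+c') (d+d')"
  by (simp add: multiset_eq_iff count_mk)

lemma decomp: assumes "set_mset A \<subseteq> {e1,e2,e3,e0}"
  shows "A = mk (count A e1) (count A e2) (count A e3) (count A e0)"
proof (subst multiset_eq_iff, intro allI)
  fix x
  show "count A x = count (mk (count A e1) (count A e2) (count A e3) (count A e0)) x"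
  proof (cases "x \<in> {e1,e2,e3,e0}")
    case True
    then consider "x = e1" | "x = e2" | "x = e3" | "x = e0" by blast
    thus ?thesis by cases simp_all
  next
    case False
    hence "count A x = 0" using assms by (meson count_inI subsetD)
    thus ?thesis using False by (simp add: count_mk)
  qed
qed

lemma atom_size:
  assumes "atom A" "set_mset A \<subseteq> {e1,e2,e3,e0}"
  shows "odd (size A) \<and> 3 \<le> size A \<and> size A \<le> 7 \<and> size A \<le> 3 + 4 * count A e0"
proof (cases "\<exists>x. 3 \<le> count A x")
  case True
  then obtain x where "3 \<le> count A x" by blast
  hence "A = {#x,x,x#}" using atom3 assms(1) by blast
  thus ?thesis by simp
next
  case False
  define a b c d where "a = count A e1" "b = count A e2" "c = count A e3" "d = count A e0"
  have A: "A = mk a b c d" using decomp[OF assms(2)] a_b_c_d_def by simp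
  have all: "\<forall>x. count A x < 3" using False by (simp add: not_le)
  have lt: "a < 3" "b < 3" "c < 3" "d < 3" using all a_b_c_d_def by blast+
  have "Z a b c d" using assms(1) A zs_mk unfolding atom_def by simp
  moreover have "0 < a + b + c + d" using assms(1) A size_mk unfolding atom_def
    by (metis gr0I size_eq_0_iff_empty)
  ultimately have "odd (a+b+c+d) \<and> 3 \<le> a+b+c+d \<and> a+b+c+d \<le> 7 \<and> a+b+c+d \<le> 3 + 4 * d"
    using lt small_case by simp
  thus ?thesis using A size_mk by simp
qed

lemma atom_mk:
  assumes "Z a b c d" "0 < a+b+c+d"
    and min: "\<forall>a' b' c' d'. a' \<le> a \<longrightarrow> b' \<le> b \<longrightarrow> c' \<le> c \<longrightarrow> d' \<le> d \<longrightarrow> Z a' b' c' d'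
       \<longrightarrow> 0 < a'+b'+c'+d' \<longrightarrow> a' = a \<and> b' = b \<and> c' = c \<and> d' = d"
  shows "atom (mk a b c d)"
  unfolding atom_def
proof (intro conjI notI)
  show "mk a b c d = {#} \<Longrightarrow> False" using assms(2) size_mk by (metis size_empty less_irrefl)
  show "zero_sum (mk a b c d)" using assms(1) zs_mk by simp
  assume "\<exists>B C. mk a b c d = B + C \<and> B \<noteq> {#} \<and> C \<noteq> {#} \<and> zero_sum B \<and> zero_sum C"
  then obtain B C where BC: "mk a b c d = B + C" "B \<noteq> {#}" "C \<noteq> {#}" "zero_sum B" by blast
  have "set_mset B \<subseteq> {e1,e2,e3,e0}" using BC(1) set_mk by (metis Un_subset_iff set_mset_union)
  hence Bd: "B = mk (count B e1) (count B e2) (count B e3) (count B e0)" by (rule decomp)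
  have le: "count B x \<le> count (mk a b c d) x" for x using BC(1) by simp
  have zb: "Z (count B e1) (count B e2) (count B e3) (count B e0)" using BC(4) Bd zs_mk by metis
  have pb: "0 < count B e1 + count B e2 + count B e3 + count B e0"
    using BC(2) Bd size_mk by (metis gr0I size_eq_0_iff_empty)
  have l1: "count B e1 \<le> a" and l2: "count B e2 \<le> b" and l3: "count B e3 \<le> c" and l4: "count B e0 \<le> d"
    using le[of e1] le[of e2] le[of e3] le[of e0] by simp_all
  have "count B e1 = a \<and> count B e2 = b \<and> count B e3 = c \<and> count B e0 = d"
    using min[rule_format, OF l1 l2 l3 l4 zb pb] .
  hence "B = mk a b c d" using Bd by simp
  thus False using BC(1,3) by simp
qed

lemma sum_list_rep: "sum_list (replicate n (mk a b c d)) = mk (n*a) (n*b) (n*c) (n*d)"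
  by (induction n) (simp_all add: mk_add, simp add: mk_def)

lemma mk_cong: "a = a' \<Longrightarrow> b = b' \<Longrightarrow> c = c' \<Longrightarrow> d = d' \<Longrightarrow> mk a b c d = mk a' b' c' d'"
  by simp

lemma at1: "atom (mk 2 2 2 1)"
  by (rule atom_mk, simp add: Z_def, simp, intro allI impI, unfold Submission.le1 Submission.le2 Submission.le3 Submission.le0, elim disjE, simp_all add: Z_def)
lemma at2: "atom (mk 3 0 0 0)"
  by (rule atom_mk, simp add: Z_def, simp, intro allI impI, unfold Submission.le1 Submission.le2 Submission.le3 Submission.le0, elim disjE, simp_all add: Z_def)
lemma at3: "atom (mk 0 3 0 0)"
  by (rule atom_mk, simp add: Z_def, simp, intro allI impI, unfold Submission.le1 Submission.le2 Submission.le3 Submission.le0, elim disjE, simp_all add: Z_def)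
lemma at4: "atom (mk 0 0 3 0)"
  by (rule atom_mk, simp add: Z_def, simp, intro allI impI, unfold Submission.le1 Submission.le2 Submission.le3 Submission.le0, elim disjE, simp_all add: Z_def)
lemma at5: "atom (mk 0 0 0 3)"
  by (rule atom_mk, simp add: Z_def, simp, intro allI impI, unfold Submission.le1 Submission.le2 Submission.le3 Submission.le0, elim disjE, simp_all add: Z_def)
lemma at6: "atom (mk 1 1 1 2)"
  by (rule atom_mk, simp add: Z_def, simp, intro allI impI, unfold Submission.le1 Submission.le2 Submission.le3 Submission.le0, elim disjE, simp_all add: Z_def)

lemma Lset_sub: assumes "k \<ge> 1"
  shows "Lset (mk (6*k) (6*k) (6*k) (3*k)) \<subseteq> {3 * k + 2 * j | j. j \<le> 2 * k}"
proof
  fix n assume "n \<in> Lset (mk (6*k) (6*k) (6*k) (3*k))"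
  then obtain xs where xs: "length xs = n" "\<forall>A\<in>set xs. atom A" "sum_list xs = mk (6*k) (6*k) (6*k) (3*k)"
    unfolding Lset_def by blast
  have sM: "set_mset (sum_list xs) \<subseteq> {e1,e2,e3,e0}" unfolding xs(3) by (rule set_mk)
  have "\<forall>A\<in>set xs. odd (size A) \<and> 3 \<le> size A \<and> size A \<le> 7 \<and> size A \<le> 3 + 4 * count A e0"
  proof
    fix A assume A: "A \<in> set xs"
    have "set_mset A \<subseteq> set_mset (sum_list xs)"
      unfolding set_mset_sum_list by (rule UN_upper[OF A])
    hence sA: "set_mset A \<subseteq> {e1,e2,e3,e0}" using sM by (rule subset_trans)
    have aA: "atom A" using xs(2) A by (rule bspec)
    show "odd (size A) \<and> 3 \<le> size A \<and> size A \<le> 7 \<and> size A \<le> 3 + 4 * count A e0"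
      by (rule atom_size[OF aA sA])
  qed
  from list_bounds[OF this] have b:
    "3*length xs \<le> sum_list (map size xs)" "sum_list (map size xs) \<le> 3*length xs + 4 * sum_list (map (\<lambda>A. count A e0) xs)"
    "even (sum_list (map size xs) + length xs)"
    by blast+
  have s1: "sum_list (map size xs) = 21*k" using size_sum_list[of xs] xs(3) size_mk by simp
  have s2: "sum_list (map (\<lambda>A. count A e0) xs) = 3*k" using count_sum_list[of xs e0] xs(3) by simp
  have c1: "3*k \<le> n" "n \<le> 7*k" and c3: "even (21*k + n)" using b s1 s2 xs(1) by simp_all
  define j where "j = (n - 3*k) div 2"
  have "even ((n - 3*k) + 2 * (12*k))" using c3 c1 by (simp add: add.commute)
  hence "even (n - 3*k)" by simp
  hence "n - 3*k = 2 * j" unfolding j_def by simp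
  hence "n = 3*k + 2*j" "j \<le> 2*k" using c1 by linarith+
  thus "n \<in> {3 * k + 2 * j | j. j \<le> 2 * k}" by blast
qed

lemma Lset_sup: assumes "k \<ge> 1"
  shows "{3 * k + 2 * j | j. j \<le> 2 * k} \<subseteq> Lset (mk (6*k) (6*k) (6*k) (3*k))"
proof
  fix n assume "n \<in> {3 * k + 2 * j | j. j \<le> 2 * k}"
  then obtain j where j: "n = 3*k + 2*j" "j \<le> 2*k" by blast
  define p q r where "p = j div 2" "q = j mod 2" "r = 3*k - 3*p - 2*q"
  define xs where "xs = replicate r (mk 2 2 2 1) @ replicate (2*p+q) (mk 3 0 0 0)
     @ replicate (2*p+q) (mk 0 3 0 0) @ replicate (2*p+q) (mk 0 0 3 0)
     @ replicate p (mk 0 0 0 3) @ replicate q (mk 1 1 1 2)"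
  have jpq: "j = 2*p + q" "q = 0 \<or> q = 1" using p_q_r_def by auto
  have h2: "2*p + q \<le> 2*k" using jpq(1) j(2) by simp
  have h3: "3*p + 2*q \<le> 3*k" using jpq(2) h2 by presburger
  have rr: "r + 3*p + 2*q = 3*k" using h3 p_q_r_def(3) by simp
  have "length xs = r + 3*(2*p+q) + p + q" unfolding xs_def by simp
  also have "\<dots> = n" using j(1) jpq(1) rr by presburger
  finally have l: "length xs = n" .
  have a: "\<forall>A\<in>set xs. atom A" unfolding xs_def using at1 at2 at3 at4 at5 at6 by auto
  have "sum_list xs = mk (6*k) (6*k) (6*k) (3*k)"
    unfolding xs_def
    apply (simp add: sum_list_rep mk_add)
    apply (rule mk_cong)
    using rr by linarith+
  thus "n \<in> Lset (mk (6*k) (6*k) (6*k) (3*k))" unfolding Lset_def using l a by blast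
qed

end

theorem lemma5p4:
  fixes e1 e2 e3 :: G and k :: nat
  assumes "is_basis3 e1 e2 e3"
    and "k \<ge> 1"
  defines "U \<equiv> {#e1, e1, e2, e2, e3, e3, e1 + e2 + e3#}"
  shows "Lset (repeat_mset (3 * k) U) = {3 * k + 2 * j | j. j \<le> 2 * k}
    \<and> real (Max (Lset (repeat_mset (3 * k) U))) / real (Min (Lset (repeat_mset (3 * k) U))) = 7 / 3"
proof -
  interpret B3 e1 e2 e3 using assms(1) by unfold_locales
  have M: "repeat_mset (3 * k) U = mk (6*k) (6*k) (6*k) (3*k)"
    unfolding U_def by (auto simp: multiset_eq_iff count_mk e0_def[symmetric])
  have L: "Lset (repeat_mset (3 * k) U) = {3 * k + 2 * j | j. j \<le> 2 * k}"
    unfolding M using Lset_sub[OF assms(2)] Lset_sup[OF assms(2)] by blast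
  have fin: "finite {3 * k + 2 * j | j. j \<le> 2 * k}"
  proof -
    have "{3 * k + 2 * j | j. j \<le> 2 * k} = (\<lambda>j. 3*k + 2*j) ` {..2*k}" by auto
    thus ?thesis by simp
  qed
  have mx: "Max {3 * k + 2 * j | j. j \<le> 2 * k} = 7*k"
    by (rule Max_eqI[OF fin]) auto
  have mn: "Min {3 * k + 2 * j | j. j \<le> 2 * k} = 3*k"
    by (rule Min_eqI[OF fin]) auto
  show ?thesis using L mx mn assms(2) by simp
qed

end
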